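(* Assume $p,q\in[0,1]$. Let $n\ge3$, and let $v\in I_n$ and $w\in I_{n-1}$ be such that $d_{G_n}(v,w)=3$ and $\alpha_1(w)\cap\alpha_2(v)=\emptyset$ (i.e. $w$ is a distant relative of $v$). Let $(v,w',v',w)$ be a path of length three in $G_n$. Then $v'\in I_n$ and $|\sigma(v')|\ge3$.
   Context: Ulam–Harris labels: $\mathcal U_n=\mathbb N^n$ ($n\ge0$, $\mathcal U_0=\{\emptyset\}$), $\mathcal U=\bigcup_{n\ge0}\mathcal U_n$; for $u=u_1\dots u_k$ write $ui=u_1\dots u_ki$. Let $(\xi_u)_{u\in\mathcal U}$ be i.i.d. Poisson with mean $1+p$, and $(\delta_{u,v})_{u,v\in\mathcal U}$, $(\mu_{\{u,v\}})_{u\ne v\in\mathcal U}$ i.i.d. Bernoulli with mean $q$, all independent. The process $\mathcal G(p,q)=(G_n)_{n\ge0}$, $G_n=(V_n,E_n)$: $G_0=(\{\emptyset\},\emptyset)$, and $I_m=V_m\cap\mathcal U_m$. Given $G_{n-1}$ ($n\ge1$): (1) for $u\in I_{n-1}$ let $\mathcal K_u=\{v\in V_{n-1}:d_{G_{n-1}}(u,v)=3\}$ and $\mathcal C_u=\{j\in\mathbb N:j\le\xi_u,\ \delta_{v,uj}=0\ \forall v\in\mathcal K_u\}$; let $\tilde G_n$ have vertex set $V_{n-1}\cup\{ui:u\in I_{n-1},i\in\mathcal C_u\}$ and edge set $E_{n-1}\cup\{\{u,ui\}:u\in I_{n-1},i\in\mathcal C_u\}$, and $\tilde I_n$ its set of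 vertices in $\mathcal U_n$. (2) For $u,v\in\tilde I_n$ write $u\overset{m}{\sim}v$ iff $d_{\tilde G_n}(u,v)=4$ and $\mu_{\{u,v\}}=1$; let $\sim$ be the equivalence relation on $\tilde I_n$ generated by $\overset m\sim$, and $\pi(u)$ the lexicographically smallest element of the class of $u$. Then $V_n=V_{n-1}\cup\{\pi(u):u\in\tilde I_n\}$, $E_n=E_{n-1}\cup\{\{v,\pi(vi)\}:v\in I_{n-1},i\in\mathcal C_v\}$. For $x\in I_n$, $\alpha(x)=\bigcup_{0\le j\le n}\{y\in I_{n-j}:d_{G_n}(y,x)=j\}$ and $\alpha_i(x)=\alpha(x)\cap I_{n-i}$. For $x\in I_n$, $\sigma(x)=\{\tilde x\in\tilde I_n:\tilde x\sim x\}$ (the set of vertices of $\tilde I_n$ merged into $x$). *)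

theory Defs
  imports Main
begin

text \<open>Ulam--Harris labels are lists of positive naturals; the child u i is u @ [i].
  The random variables xi, delta, mu are given by an arbitrary realization:
  xi :: label => nat (Poisson values), delta v u (Bernoulli, True = 1),
  mu {u,v} (Bernoulli indexed by unordered pairs, True = 1).\<close>

type_synonym lbl = "nat list"
type_synonym graph = "lbl set \<times> lbl set set"

definition Ulev :: "nat \<Rightarrow> lbl set" where
  "Ulev n = {u. length u = n \<and> (\<forall>i\<in>set u. 0 < i)}"

definition has_walk :: "graph \<Rightarrow> lbl \<Rightarrow> lbl \<Rightarrow> nat \<Rightarrow> bool" where
  "has_walk G u v k = (\<exists>xs. length xs = Suc k \<and> hd xs = u \<and> last xs = v \<and>
      set xs \<subseteq> fst G \<and> (\<forall>i<k. {xs ! i, xs ! Suc i} \<in> snd G))"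

definition gdist :: "graph \<Rightarrow> lbl \<Rightarrow> lbl \<Rightarrow> nat \<Rightarrow> bool" where
  "gdist G u v k = (has_walk G u v k \<and> (\<forall>m<k. \<not> has_walk G u v m))"

definition Kset :: "graph \<Rightarrow> lbl \<Rightarrow> lbl set" where
  "Kset G u = {v \<in> fst G. gdist G u v 3}"

definition Cset :: "(lbl \<Rightarrow> nat) \<Rightarrow> (lbl \<Rightarrow> lbl \<Rightarrow> bool) \<Rightarrow> graph \<Rightarrow> lbl \<Rightarrow> nat set" where
  "Cset \<xi> \<delta> G u = {j. 1 \<le> j \<and> j \<le> \<xi> u \<and> (\<forall>v\<in>Kset G u. \<not> \<delta> v (u @ [j]))}"

definition Iof :: "nat \<Rightarrow> graph \<Rightarrow> lbl set" where
  "Iof m G = fst G \<inter> Ulev m"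

definition Gtil :: "(lbl \<Rightarrow> nat) \<Rightarrow> (lbl \<Rightarrow> lbl \<Rightarrow> bool) \<Rightarrow> nat \<Rightarrow> graph \<Rightarrow> graph" where
  "Gtil \<xi> \<delta> n G =
    (fst G \<union> {u @ [i] | u i. u \<in> Iof (n - 1) G \<and> i \<in> Cset \<xi> \<delta> G u},
     snd G \<union> {{u, u @ [i]} | u i. u \<in> Iof (n - 1) G \<and> i \<in> Cset \<xi> \<delta> G u})"

definition mrel :: "(lbl \<Rightarrow> nat) \<Rightarrow> (lbl \<Rightarrow> lbl \<Rightarrow> bool) \<Rightarrow> (lbl set \<Rightarrow> bool) \<Rightarrow> nat \<Rightarrow> graph \<Rightarrow> lbl \<Rightarrow> lbl \<Rightarrow> bool" where
  "mrel \<xi> \<delta> \<mu> n G u v = (u \<in> Iof n (Gtil \<xi> \<delta> n G) \<and> v \<in> Iof n (Gtil \<xi> \<delta> n G) \<and>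
      gdist (Gtil \<xi> \<delta> n G) u v 4 \<and> \<mu> {u, v})"

definition simrel :: "(lbl \<Rightarrow> nat) \<Rightarrow> (lbl \<Rightarrow> lbl \<Rightarrow> bool) \<Rightarrow> (lbl set \<Rightarrow> bool) \<Rightarrow> nat \<Rightarrow> graph \<Rightarrow> lbl \<Rightarrow> lbl \<Rightarrow> bool" where
  "simrel \<xi> \<delta> \<mu> n G u v = (u \<in> Iof n (Gtil \<xi> \<delta> n G) \<and> v \<in> Iof n (Gtil \<xi> \<delta> n G) \<and>
      (u, v) \<in> {(x, y). mrel \<xi> \<delta> \<mu> n G x y \<or> mrel \<xi> \<delta> \<mu> n G y x}\<^sup>*)"

definition lexle :: "lbl \<Rightarrow> lbl \<Rightarrow> bool" where
  "lexle x y = (x = y \<or> (x, y) \<in> lexord {(a, b). a < b})"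

definition piof :: "(lbl \<Rightarrow> nat) \<Rightarrow> (lbl \<Rightarrow> lbl \<Rightarrow> bool) \<Rightarrow> (lbl set \<Rightarrow> bool) \<Rightarrow> nat \<Rightarrow> graph \<Rightarrow> lbl \<Rightarrow> lbl" where
  "piof \<xi> \<delta> \<mu> n G u = (THE x. simrel \<xi> \<delta> \<mu> n G u x \<and> (\<forall>y. simrel \<xi> \<delta> \<mu> n G u y \<longrightarrow> lexle x y))"

definition step :: "(lbl \<Rightarrow> nat) \<Rightarrow> (lbl \<Rightarrow> lbl \<Rightarrow> bool) \<Rightarrow> (lbl set \<Rightarrow> bool) \<Rightarrow> nat \<Rightarrow> graph \<Rightarrow> graph" where
  "step \<xi> \<delta> \<mu> n G =
    (fst G \<union> piof \<xi> \<delta> \<mu> n G ` Iof n (Gtil \<xi> \<delta> n G),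
     snd G \<union> {{v, piof \<xi> \<delta> \<mu> n G (v @ [i])} | v i. v \<in> Iof (n - 1) G \<and> i \<in> Cset \<xi> \<delta> G v})"

primrec Gproc :: "(lbl \<Rightarrow> nat) \<Rightarrow> (lbl \<Rightarrow> lbl \<Rightarrow> bool) \<Rightarrow> (lbl set \<Rightarrow> bool) \<Rightarrow> nat \<Rightarrow> graph" where
  "Gproc \<xi> \<delta> \<mu> 0 = ({[]}, {})"
| "Gproc \<xi> \<delta> \<mu> (Suc n) = step \<xi> \<delta> \<mu> (Suc n) (Gproc \<xi> \<delta> \<mu> n)"

definition Ilev :: "(lbl \<Rightarrow> nat) \<Rightarrow> (lbl \<Rightarrow> lbl \<Rightarrow> bool) \<Rightarrow> (lbl set \<Rightarrow> bool) \<Rightarrow> nat \<Rightarrow> lbl set" where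
  "Ilev \<xi> \<delta> \<mu> m = Iof m (Gproc \<xi> \<delta> \<mu> m)"

definition alpha :: "(lbl \<Rightarrow> nat) \<Rightarrow> (lbl \<Rightarrow> lbl \<Rightarrow> bool) \<Rightarrow> (lbl set \<Rightarrow> bool) \<Rightarrow> nat \<Rightarrow> nat \<Rightarrow> lbl \<Rightarrow> lbl set" where
  "alpha \<xi> \<delta> \<mu> m i x = {y \<in> Ilev \<xi> \<delta> \<mu> (m - i). gdist (Gproc \<xi> \<delta> \<mu> m) y x i}"

definition sigma :: "(lbl \<Rightarrow> nat) \<Rightarrow> (lbl \<Rightarrow> lbl \<Rightarrow> bool) \<Rightarrow> (lbl set \<Rightarrow> bool) \<Rightarrow> nat \<Rightarrow> lbl \<Rightarrow> lbl set" where
  "sigma \<xi> \<delta> \<mu> n x = {y. simrel \<xi> \<delta> \<mu> n (Gproc \<xi> \<delta> \<mu> (n - 1)) y x}"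

end

theory Submission imports Defs "HOL-Library.List_Lexorder" begin

lemma lexle_le: "lexle x y = (x \<le> y)"
  by (simp add: lexle_def list_le_def list_less_def) blast

context fixes \<xi> :: "lbl \<Rightarrow> nat" and \<delta> :: "lbl \<Rightarrow> lbl \<Rightarrow> bool" and \<mu> :: "lbl set \<Rightarrow> bool"
begin

lemma finite_Gtil: "finite (fst G) \<Longrightarrow> finite (fst (Gtil \<xi> \<delta> n G))"
proof -
  assume f: "finite (fst G)"
  have "{u @ [i] | u i. u \<in> Iof (n - 1) G \<and> i \<in> Cset \<xi> \<delta> G u} \<subseteq> (\<Union>u\<in>fst G. (\<lambda>i. u @ [i]) ` {1..\<xi> u})"
    by (auto simp: Iof_def Cset_def)
  moreover have "finite (\<Union>u\<in>fst G. (\<lambda>i. u @ [i]) ` {1..\<xi> u})" using f by auto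
  ultimately have "finite {u @ [i] | u i. u \<in> Iof (n - 1) G \<and> i \<in> Cset \<xi> \<delta> G u}" by (rule finite_subset)
  thus ?thesis using f by (simp add: Gtil_def)
qed

lemma simrel_mem: "simrel \<xi> \<delta> \<mu> n G u y \<Longrightarrow> u \<in> Iof n (Gtil \<xi> \<delta> n G) \<and> y \<in> Iof n (Gtil \<xi> \<delta> n G)"
  by (simp add: simrel_def)

lemma simrel_refl: "u \<in> Iof n (Gtil \<xi> \<delta> n G) \<Longrightarrow> simrel \<xi> \<delta> \<mu> n G u u"
  by (simp add: simrel_def)

lemma simrel_sym: "simrel \<xi> \<delta> \<mu> n G u y \<Longrightarrow> simrel \<xi> \<delta> \<mu> n G y u"
proof -
  let ?R = "{(x, y). mrel \<xi> \<delta> \<mu> n G x y \<or> mrel \<xi> \<delta> \<mu> n G y x}"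
  have "sym ?R" by (auto simp: sym_def)
  hence "sym (?R\<^sup>*)" by (rule sym_rtrancl)
  thus "simrel \<xi> \<delta> \<mu> n G u y \<Longrightarrow> simrel \<xi> \<delta> \<mu> n G y u"
    unfolding simrel_def by (meson symD)
qed

lemma simrel_trans: "simrel \<xi> \<delta> \<mu> n G u y \<Longrightarrow> simrel \<xi> \<delta> \<mu> n G y z \<Longrightarrow> simrel \<xi> \<delta> \<mu> n G u z"
  unfolding simrel_def by (meson rtrancl_trans)

lemma piof_prop:
  assumes f: "finite (fst G)" and u: "u \<in> Iof n (Gtil \<xi> \<delta> n G)"
  shows "simrel \<xi> \<delta> \<mu> n G u (piof \<xi> \<delta> \<mu> n G u) \<and> (\<forall>y. simrel \<xi> \<delta> \<mu> n G u y \<longrightarrow> piof \<xi> \<delta> \<mu> n G u \<le> y)"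
proof -
  define C where "C = {y. simrel \<xi> \<delta> \<mu> n G u y}"
  have "C \<subseteq> fst (Gtil \<xi> \<delta> n G)" using simrel_mem[of n G u] by (auto simp: C_def Iof_def)
  hence fC: "finite C" using finite_Gtil[OF f] finite_subset by blast
  have uC: "u \<in> C" using simrel_refl[OF u] by (simp add: C_def)
  hence ne: "C \<noteq> {}" by blast
  have P: "Min C \<in> C \<and> (\<forall>y\<in>C. Min C \<le> y)" using fC ne by simp
  have "piof \<xi> \<delta> \<mu> n G u = Min C"
    unfolding piof_def lexle_le
  proof (rule the_equality)
    show "simrel \<xi> \<delta> \<mu> n G u (Min C) \<and> (\<forall>y. simrel \<xi> \<delta> \<mu> n G u y \<longrightarrow> Min C \<le> y)"
      using P by (simp add: C_def)
    fix x assume "simrel \<xi> \<delta> \<mu> n G u x \<and> (\<forall>y. simrel \<xi> \<delta> \<mu> n G u y \<longrightarrow> x \<le> y)"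
    thus "x = Min C" using P by (simp add: C_def) (meson order_antisym)
  qed
  thus ?thesis using P by (simp add: C_def)
qed

lemma piof_in: "finite (fst G) \<Longrightarrow> u \<in> Iof n (Gtil \<xi> \<delta> n G) \<Longrightarrow> piof \<xi> \<delta> \<mu> n G u \<in> Iof n (Gtil \<xi> \<delta> n G)"
  using piof_prop simrel_mem by blast

lemma inv:
  "finite (fst (Gproc \<xi> \<delta> \<mu> m)) \<and> (\<forall>x\<in>fst (Gproc \<xi> \<delta> \<mu> m). length x \<le> m \<and> x \<in> Ulev (length x)) \<and>
   (\<forall>e\<in>snd (Gproc \<xi> \<delta> \<mu> m). \<exists>a b. e = {a,b} \<and> a \<in> fst (Gproc \<xi> \<delta> \<mu> m) \<and> b \<in> fst (Gproc \<xi> \<delta> \<mu> m) \<and> length b = Suc (length a))"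
proof (induction m)
  case 0
  then show ?case by (simp add: Ulev_def)
next
  case (Suc m)
  define G where "G = Gproc \<xi> \<delta> \<mu> m"
  have f: "finite (fst G)" using Suc G_def by simp
  have pi: "piof \<xi> \<delta> \<mu> (Suc m) G u \<in> Iof (Suc m) (Gtil \<xi> \<delta> (Suc m) G)" if "u \<in> Iof (Suc m) (Gtil \<xi> \<delta> (Suc m) G)" for u
    using piof_prop[OF f that] simrel_mem by blast
  have new: "v @ [i] \<in> Iof (Suc m) (Gtil \<xi> \<delta> (Suc m) G)" if "v \<in> Iof m G" "i \<in> Cset \<xi> \<delta> G v" for v i
    using that by (auto simp: Iof_def Gtil_def Ulev_def Cset_def)
  have S: "Gproc \<xi> \<delta> \<mu> (Suc m) = step \<xi> \<delta> \<mu> (Suc m) G" by (simp add: G_def)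
  have fin: "finite (fst (Gproc \<xi> \<delta> \<mu> (Suc m)))"
    unfolding S step_def using f finite_Gtil[OF f, of "Suc m"] by (auto simp: Iof_def)
  have vert: "\<forall>x\<in>fst (Gproc \<xi> \<delta> \<mu> (Suc m)). length x \<le> Suc m \<and> x \<in> Ulev (length x)"
  proof
    fix x assume "x \<in> fst (Gproc \<xi> \<delta> \<mu> (Suc m))"
    hence "x \<in> fst G \<or> (\<exists>u \<in> Iof (Suc m) (Gtil \<xi> \<delta> (Suc m) G). x = piof \<xi> \<delta> \<mu> (Suc m) G u)"
      unfolding S step_def by auto
    thus "length x \<le> Suc m \<and> x \<in> Ulev (length x)"
    proof
      assume "x \<in> fst G" thus ?thesis using Suc G_def by fastforce
    next
      assume "\<exists>u \<in> Iof (Suc m) (Gtil \<xi> \<delta> (Suc m) G). x = piof \<xi> \<delta> \<mu> (Suc m) G u"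
      then obtain u where "u \<in> Iof (Suc m) (Gtil \<xi> \<delta> (Suc m) G)" "x = piof \<xi> \<delta> \<mu> (Suc m) G u" by blast
      hence "x \<in> Ulev (Suc m)" using pi by (auto simp: Iof_def)
      thus ?thesis by (simp add: Ulev_def)
    qed
  qed
  have edge: "\<forall>e\<in>snd (Gproc \<xi> \<delta> \<mu> (Suc m)). \<exists>a b. e = {a,b} \<and> a \<in> fst (Gproc \<xi> \<delta> \<mu> (Suc m)) \<and> b \<in> fst (Gproc \<xi> \<delta> \<mu> (Suc m)) \<and> length b = Suc (length a)"
  proof
    fix e assume "e \<in> snd (Gproc \<xi> \<delta> \<mu> (Suc m))"
    hence "e \<in> snd G \<or> (\<exists>v i. e = {v, piof \<xi> \<delta> \<mu> (Suc m) G (v @ [i])} \<and> v \<in> Iof m G \<and> i \<in> Cset \<xi> \<delta> G v)"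
      unfolding S step_def by auto
    thus "\<exists>a b. e = {a,b} \<and> a \<in> fst (Gproc \<xi> \<delta> \<mu> (Suc m)) \<and> b \<in> fst (Gproc \<xi> \<delta> \<mu> (Suc m)) \<and> length b = Suc (length a)"
    proof
      assume "e \<in> snd G"
      then obtain a b where "e = {a,b}" "a \<in> fst G" "b \<in> fst G" "length b = Suc (length a)"
        using Suc G_def by blast
      moreover have "fst G \<subseteq> fst (Gproc \<xi> \<delta> \<mu> (Suc m))" unfolding S step_def by auto
      ultimately show ?thesis by blast
    next
      assume "\<exists>v i. e = {v, piof \<xi> \<delta> \<mu> (Suc m) G (v @ [i])} \<and> v \<in> Iof m G \<and> i \<in> Cset \<xi> \<delta> G v"
      then obtain v i where e: "e = {v, piof \<xi> \<delta> \<mu> (Suc m) G (v @ [i])}" "v \<in> Iof m G" "i \<in> Cset \<xi> \<delta> G v" by blast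
      have p: "piof \<xi> \<delta> \<mu> (Suc m) G (v @ [i]) \<in> Iof (Suc m) (Gtil \<xi> \<delta> (Suc m) G)" using pi new e by blast
      have "v \<in> fst (Gproc \<xi> \<delta> \<mu> (Suc m))" using e(2) unfolding S step_def by (auto simp: Iof_def)
      moreover have "piof \<xi> \<delta> \<mu> (Suc m) G (v @ [i]) \<in> fst (Gproc \<xi> \<delta> \<mu> (Suc m))"
        using pi new e unfolding S step_def by auto
      moreover have "length (piof \<xi> \<delta> \<mu> (Suc m) G (v @ [i])) = Suc (length v)"
        using p e(2) by (simp add: Iof_def Ulev_def)
      ultimately show ?thesis using e(1) by blast
    qed
  qed
  show ?case using fin vert edge by blast
qed


lemma edge_len: "{x,y} \<in> snd (Gproc \<xi> \<delta> \<mu> k) \<Longrightarrow> length x = Suc (length y) \<or> length y = Suc (length x)"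
  using inv[of k] by (auto simp: doubleton_eq_iff)

lemma edge_mem: "{x,y} \<in> snd (Gproc \<xi> \<delta> \<mu> k) \<Longrightarrow> x \<in> fst (Gproc \<xi> \<delta> \<mu> k) \<and> y \<in> fst (Gproc \<xi> \<delta> \<mu> k)"
  using inv[of k] by (auto simp: doubleton_eq_iff)

lemma vert_len: "x \<in> fst (Gproc \<xi> \<delta> \<mu> k) \<Longrightarrow> length x \<le> k \<and> x \<in> Ulev (length x)"
  using inv[of k] by blast

lemma mono1: "fst (Gproc \<xi> \<delta> \<mu> m) \<subseteq> fst (Gproc \<xi> \<delta> \<mu> (Suc m)) \<and> snd (Gproc \<xi> \<delta> \<mu> m) \<subseteq> snd (Gproc \<xi> \<delta> \<mu> (Suc m))"
  by (auto simp: step_def)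

lemma mono_le: "m \<le> k \<Longrightarrow> fst (Gproc \<xi> \<delta> \<mu> m) \<subseteq> fst (Gproc \<xi> \<delta> \<mu> k) \<and> snd (Gproc \<xi> \<delta> \<mu> m) \<subseteq> snd (Gproc \<xi> \<delta> \<mu> k)"
proof (induction k rule: dec_induct)
  case base then show ?case by simp
next
  case (step k) then show ?case using mono1[of k] by blast
qed

lemma vert_level: "x \<in> fst (Gproc \<xi> \<delta> \<mu> m) \<Longrightarrow> x \<in> fst (Gproc \<xi> \<delta> \<mu> (length x))"
proof (induction m)
  case 0 then show ?case by simp
next
  case (Suc m)
  define G where "G = Gproc \<xi> \<delta> \<mu> m"
  have f: "finite (fst G)" using inv G_def by blast
  from Suc.prems have "x \<in> fst G \<or> (\<exists>u \<in> Iof (Suc m) (Gtil \<xi> \<delta> (Suc m) G). x = piof \<xi> \<delta> \<mu> (Suc m) G u)"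
    by (auto simp: G_def step_def)
  then show ?case
  proof
    assume "x \<in> fst G" thus ?thesis using Suc.IH G_def by blast
  next
    assume "\<exists>u \<in> Iof (Suc m) (Gtil \<xi> \<delta> (Suc m) G). x = piof \<xi> \<delta> \<mu> (Suc m) G u"
    then obtain u where "u \<in> Iof (Suc m) (Gtil \<xi> \<delta> (Suc m) G)" "x = piof \<xi> \<delta> \<mu> (Suc m) G u" by blast
    hence "x \<in> Ulev (Suc m)" using piof_in[OF f] by (simp add: Iof_def)
    hence "length x = Suc m" by (simp add: Ulev_def)
    thus ?thesis using Suc.prems by simp
  qed
qed

lemma edge_level: "{a,b} \<in> snd (Gproc \<xi> \<delta> \<mu> m) \<Longrightarrow> length b = Suc (length a) \<Longrightarrow> {a,b} \<in> snd (Gproc \<xi> \<delta> \<mu> (length b))"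
proof (induction m)
  case 0 then show ?case by simp
next
  case (Suc m)
  define G where "G = Gproc \<xi> \<delta> \<mu> m"
  have f: "finite (fst G)" using inv G_def by blast
  from Suc.prems(1) have "{a,b} \<in> snd G \<or> (\<exists>v i. {a,b} = {v, piof \<xi> \<delta> \<mu> (Suc m) G (v @ [i])} \<and> v \<in> Iof m G \<and> i \<in> Cset \<xi> \<delta> G v)"
    by (auto simp: G_def step_def)
  then show ?case
  proof
    assume "{a,b} \<in> snd G" thus ?thesis using Suc G_def by blast
  next
    assume "\<exists>v i. {a,b} = {v, piof \<xi> \<delta> \<mu> (Suc m) G (v @ [i])} \<and> v \<in> Iof m G \<and> i \<in> Cset \<xi> \<delta> G v"
    then obtain v i where e: "{a,b} = {v, piof \<xi> \<delta> \<mu> (Suc m) G (v @ [i])}" "v \<in> Iof m G" "i \<in> Cset \<xi> \<delta> G v" by blast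
    have "v @ [i] \<in> Iof (Suc m) (Gtil \<xi> \<delta> (Suc m) G)"
      using e by (auto simp: Iof_def Gtil_def Ulev_def Cset_def)
    hence "piof \<xi> \<delta> \<mu> (Suc m) G (v @ [i]) \<in> Ulev (Suc m)" using piof_in[OF f] by (simp add: Iof_def)
    hence l: "length (piof \<xi> \<delta> \<mu> (Suc m) G (v @ [i])) = Suc m" by (simp add: Ulev_def)
    have lv: "length v = m" using e(2) by (simp add: Iof_def Ulev_def)
    have "length b = Suc m" using e(1) l lv Suc.prems(2) by (auto simp: doubleton_eq_iff)
    thus ?thesis using Suc.prems by simp
  qed
qed

lemma hw0: "has_walk G u v 0 \<Longrightarrow> u = v"
  unfolding has_walk_def by (metis Suc_length_conv last_ConsL length_0_conv list.sel(1))

lemma hw1: "has_walk G u v (Suc 0) \<Longrightarrow> {u,v} \<in> snd G"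
  unfolding has_walk_def
proof (elim exE conjE)
  fix xs :: "lbl list" assume "length xs = Suc (Suc 0)" "hd xs = u" "last xs = v" "\<forall>i<Suc 0. {xs ! i, xs ! Suc i} \<in> snd G"
  then show "{u,v} \<in> snd G"
    by (cases xs; cases "tl xs"; auto)
qed

lemma gdist1: "{x,y} \<in> snd G \<Longrightarrow> x \<in> fst G \<Longrightarrow> y \<in> fst G \<Longrightarrow> x \<noteq> y \<Longrightarrow> gdist G x y 1"
  unfolding gdist_def
proof (intro conjI allI impI)
  assume "{x,y} \<in> snd G" "x \<in> fst G" "y \<in> fst G"
  thus "has_walk G x y 1" unfolding has_walk_def by (intro exI[of _ "[x,y]"]) auto
next
  fix m :: nat assume "x \<noteq> y" "m < 1"
  thus "\<not> has_walk G x y m" using hw0 by blast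
qed

lemma gdist2: "{x,z} \<in> snd G \<Longrightarrow> {z,y} \<in> snd G \<Longrightarrow> x \<in> fst G \<Longrightarrow> y \<in> fst G \<Longrightarrow> z \<in> fst G \<Longrightarrow> x \<noteq> y
   \<Longrightarrow> {x,y} \<notin> snd G \<Longrightarrow> gdist G x y 2"
  unfolding gdist_def
proof (intro conjI allI impI)
  assume "{x,z} \<in> snd G" "{z,y} \<in> snd G" "x \<in> fst G" "y \<in> fst G" "z \<in> fst G"
  thus "has_walk G x y 2" unfolding has_walk_def
    by (intro exI[of _ "[x,z,y]"]) (auto simp: less_Suc_eq numeral_2_eq_2)
next
  fix m :: nat assume "x \<noteq> y" "m < 2" "{x,y} \<notin> snd G"
  thus "\<not> has_walk G x y m" using hw0 hw1 by (metis less_2_cases)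
qed

lemma hw4: "has_walk G a b 4 \<Longrightarrow> \<exists>x1 x2 x3. {a,x1} \<in> snd G \<and> {x1,x2} \<in> snd G \<and> {x2,x3} \<in> snd G \<and> {x3,b} \<in> snd G
   \<and> x1 \<in> fst G \<and> x2 \<in> fst G \<and> x3 \<in> fst G"
  unfolding has_walk_def
proof (elim exE conjE)
  fix xs :: "lbl list" assume A: "length xs = Suc 4" "hd xs = a" "last xs = b" "set xs \<subseteq> fst G" "\<forall>i<4. {xs ! i, xs ! Suc i} \<in> snd G"
  have h: "xs ! 0 = a" using A(1,2) by (cases xs) auto
  have "xs \<noteq> []" using A(1) by auto
  hence l: "xs ! 4 = b" using A(1,3) last_conv_nth[of xs] by simp
  have e: "{xs!0, xs!1} \<in> snd G" "{xs!1, xs!2} \<in> snd G" "{xs!2, xs!3} \<in> snd G" "{xs!3, xs!4} \<in> snd G"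
    using A(5) by (auto simp: numeral_eq_Suc)
  have m: "xs!1 \<in> fst G" "xs!2 \<in> fst G" "xs!3 \<in> fst G" using A(1,4) nth_mem by (auto intro!: subsetD[OF A(4)])
  show ?thesis using e m h l by blast
qed


lemma gt_vert: "x \<in> fst (Gtil \<xi> \<delta> (Suc m) (Gproc \<xi> \<delta> \<mu> m)) \<Longrightarrow> length x \<le> Suc m"
proof -
  assume "x \<in> fst (Gtil \<xi> \<delta> (Suc m) (Gproc \<xi> \<delta> \<mu> m))"
  hence "x \<in> fst (Gproc \<xi> \<delta> \<mu> m) \<or> (\<exists>u i. x = u @ [i] \<and> u \<in> Iof m (Gproc \<xi> \<delta> \<mu> m))"
    by (auto simp: Gtil_def)
  thus ?thesis
  proof
    assume "x \<in> fst (Gproc \<xi> \<delta> \<mu> m)" thus ?thesis using vert_len[of x m] by simp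
  next
    assume "\<exists>u i. x = u @ [i] \<and> u \<in> Iof m (Gproc \<xi> \<delta> \<mu> m)"
    thus ?thesis by (auto simp: Iof_def Ulev_def)
  qed
qed

lemma gt_nb: "{x,y} \<in> snd (Gtil \<xi> \<delta> (Suc m) (Gproc \<xi> \<delta> \<mu> m)) \<Longrightarrow> length x = Suc m \<Longrightarrow> \<exists>i. x = y @ [i]"
proof -
  assume e: "{x,y} \<in> snd (Gtil \<xi> \<delta> (Suc m) (Gproc \<xi> \<delta> \<mu> m))" and l: "length x = Suc m"
  from e have "{x,y} \<in> snd (Gproc \<xi> \<delta> \<mu> m) \<or> (\<exists>u i. {x,y} = {u, u @ [i]} \<and> u \<in> Iof m (Gproc \<xi> \<delta> \<mu> m))"
    by (auto simp: Gtil_def)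
  thus ?thesis
  proof
    assume "{x,y} \<in> snd (Gproc \<xi> \<delta> \<mu> m)"
    hence "x \<in> fst (Gproc \<xi> \<delta> \<mu> m)" using edge_mem by blast
    thus ?thesis using vert_len l by fastforce
  next
    assume "\<exists>u i. {x,y} = {u, u @ [i]} \<and> u \<in> Iof m (Gproc \<xi> \<delta> \<mu> m)"
    then obtain u i where "{x,y} = {u, u @ [i]}" "u \<in> Iof m (Gproc \<xi> \<delta> \<mu> m)" by blast
    thus ?thesis using l by (auto simp: doubleton_eq_iff Iof_def Ulev_def)
  qed
qed

lemma gt_old: "{x,y} \<in> snd (Gtil \<xi> \<delta> (Suc m) (Gproc \<xi> \<delta> \<mu> m)) \<Longrightarrow> length x \<le> m \<Longrightarrow> length y \<le> m \<Longrightarrow> {x,y} \<in> snd (Gproc \<xi> \<delta> \<mu> m)"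
proof -
  assume e: "{x,y} \<in> snd (Gtil \<xi> \<delta> (Suc m) (Gproc \<xi> \<delta> \<mu> m))" and l: "length x \<le> m" "length y \<le> m"
  from e have "{x,y} \<in> snd (Gproc \<xi> \<delta> \<mu> m) \<or> (\<exists>u i. {x,y} = {u, u @ [i]} \<and> u \<in> Iof m (Gproc \<xi> \<delta> \<mu> m))"
    by (auto simp: Gtil_def)
  thus ?thesis
  proof
    assume "\<exists>u i. {x,y} = {u, u @ [i]} \<and> u \<in> Iof m (Gproc \<xi> \<delta> \<mu> m)"
    then obtain u i where u: "{x,y} = {u, u @ [i]}" "u \<in> Iof m (Gproc \<xi> \<delta> \<mu> m)" by blast
    hence "length (u @ [i]) = Suc m" by (simp add: Iof_def Ulev_def)
    moreover have "u @ [i] = x \<or> u @ [i] = y" using u(1) by (auto simp: doubleton_eq_iff)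
    ultimately have False using l by auto
    thus ?thesis ..
  qed
qed

lemma key:
  assumes "mrel \<xi> \<delta> \<mu> (Suc m) (Gproc \<xi> \<delta> \<mu> m) (a @ [i]) (b @ [j])" "length a = m" "length b = m" "a \<noteq> b"
  shows "\<exists>x. {a,x} \<in> snd (Gproc \<xi> \<delta> \<mu> m) \<and> {x,b} \<in> snd (Gproc \<xi> \<delta> \<mu> m) \<and> Suc (length x) = m"
proof -
  let ?T = "Gtil \<xi> \<delta> (Suc m) (Gproc \<xi> \<delta> \<mu> m)"
  have "has_walk ?T (a @ [i]) (b @ [j]) 4" using assms(1) by (simp add: mrel_def gdist_def)
  then obtain x1 x2 x3 where w: "{a @ [i],x1} \<in> snd ?T" "{x1,x2} \<in> snd ?T" "{x2,x3} \<in> snd ?T" "{x3,b @ [j]} \<in> snd ?T"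
    "x1 \<in> fst ?T" "x2 \<in> fst ?T" "x3 \<in> fst ?T" using hw4 by blast
  have "x1 = a" using gt_nb[OF w(1)] assms(2) by auto
  moreover have "x3 = b" using gt_nb[of "b @ [j]" x3 m] w(4) assms(3) by (auto simp: insert_commute)
  ultimately have w2: "{a,x2} \<in> snd ?T" "{x2,b} \<in> snd ?T" using w by auto
  have "length x2 \<noteq> Suc m"
  proof
    assume "length x2 = Suc m"
    then obtain k1 k2 where "x2 = a @ [k1]" "x2 = b @ [k2]"
      using gt_nb[of x2 a m] gt_nb[of x2 b m] w2 by (auto simp: insert_commute)
    thus False using assms(4) by simp
  qed
  hence l2: "length x2 \<le> m" using gt_vert[OF w(6)] by simp
  have e: "{a,x2} \<in> snd (Gproc \<xi> \<delta> \<mu> m)" "{x2,b} \<in> snd (Gproc \<xi> \<delta> \<mu> m)"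
    using gt_old w2 l2 assms(2,3) by auto
  have "length x2 \<le> m" using l2 .
  hence "Suc (length x2) = m" using edge_len[OF e(1)] assms(2) by auto
  thus ?thesis using e by blast
qed


end

theorem lemma6p1:
  fixes \<xi> :: "lbl \<Rightarrow> nat" and \<delta> :: "lbl \<Rightarrow> lbl \<Rightarrow> bool" and \<mu> :: "lbl set \<Rightarrow> bool"
    and n :: nat and v w w' v' :: lbl
  assumes "3 \<le> n"
    and "v \<in> Ilev \<xi> \<delta> \<mu> n" and "w \<in> Ilev \<xi> \<delta> \<mu> (n - 1)"
    and "gdist (Gproc \<xi> \<delta> \<mu> n) v w 3"
    and "alpha \<xi> \<delta> \<mu> (n - 1) 1 w \<inter> alpha \<xi> \<delta> \<mu> n 2 v = {}"
    and "distinct [v, w', v', w]"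
    and "{v, w', v', w} \<subseteq> fst (Gproc \<xi> \<delta> \<mu> n)"
    and "{v, w'} \<in> snd (Gproc \<xi> \<delta> \<mu> n)"
    and "{w', v'} \<in> snd (Gproc \<xi> \<delta> \<mu> n)"
    and "{v', w} \<in> snd (Gproc \<xi> \<delta> \<mu> n)"
  shows "v' \<in> Ilev \<xi> \<delta> \<mu> n \<and> 3 \<le> card (sigma \<xi> \<delta> \<mu> n v')"
proof -
  obtain m where nm: "n = Suc m" using assms(1) by (cases n) auto
  have m2: "2 \<le> m" using assms(1) nm by simp
  define G where "G = Gproc \<xi> \<delta> \<mu> m"
  define Gn where "Gn = Gproc \<xi> \<delta> \<mu> n"
  have GnS: "Gn = step \<xi> \<delta> \<mu> (Suc m) G" by (simp add: Gn_def G_def nm)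
  have fG: "finite (fst G)" using inv G_def by blast
  have GGn: "fst G \<subseteq> fst Gn \<and> snd G \<subseteq> snd Gn" using mono1 G_def Gn_def nm by blast
  have lv: "length v = Suc m" using assms(2) nm by (simp add: Ilev_def Iof_def Ulev_def)
  have lw: "length w = m" using assms(3) nm by (simp add: Ilev_def Iof_def Ulev_def)
  have wG: "w \<in> fst G" using assms(3) nm by (simp add: Ilev_def Iof_def G_def)
  have vGn: "v \<in> fst Gn" "w' \<in> fst Gn" "v' \<in> fst Gn" "w \<in> fst Gn" using assms(7) Gn_def by auto
  have lenle: "length x \<le> Suc m" if "x \<in> fst Gn" for x using vert_len that Gn_def nm by blast
  have "length w' = m" using edge_len[where x=v and y=w' and k=n] assms(8) lv lenle[OF vGn(2)] by auto
  hence lw': "length w' = m" .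
  have bad: False if x: "x \<in> fst Gn" "Suc (length x) = m" "{x,w} \<in> snd Gn" "{x,w'} \<in> snd Gn" for x
  proof -
    have xlev: "x \<in> Ilev \<xi> \<delta> \<mu> (m - 1)"
      using vert_level[where x=x and m=n] vert_len[where x=x and k=n] x(1,2) by (auto simp: Ilev_def Iof_def Gn_def)
    have xG: "x \<in> fst G" using xlev mono_le[where m="m - 1" and k=m] by (auto simp: Ilev_def Iof_def G_def)
    have exG: "{x,w} \<in> snd G" using edge_level[where a=x and b=w and m=n] x(2,3) lw by (simp add: Gn_def G_def)
    have "x \<noteq> w" using x(2) lw by auto
    hence "gdist G x w 1" using gdist1 exG xG wG by blast
    hence A1: "x \<in> alpha \<xi> \<delta> \<mu> (n - 1) 1 w" using xlev nm by (simp add: alpha_def G_def)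
    have "{x,v} \<notin> snd Gn" using edge_len[where x=x and y=v and k=n] lv x(2) by (auto simp: Gn_def)
    moreover have "x \<noteq> v" using x(2) lv by auto
    moreover have "{w',v} \<in> snd Gn" using assms(8) Gn_def by (simp add: insert_commute)
    ultimately have "gdist Gn x v 2" using gdist2[of x w' Gn v] x vGn by blast
    hence A2: "x \<in> alpha \<xi> \<delta> \<mu> n 2 v" using xlev nm by (simp add: alpha_def Gn_def numeral_2_eq_2)
    show False using A1 A2 assms(5) by blast
  qed
  have lv': "length v' = Suc m"
  proof -
    have "length v' = Suc (length w') \<or> length w' = Suc (length v')"
      using edge_len[where x=w' and y=v' and k=n] assms(9) by auto
    moreover have "\<not> Suc (length v') = m"
    proof
      assume h: "Suc (length v') = m"
      show False
        by (rule bad[OF vGn(3) h]) (use assms(9,10) Gn_def in \<open>auto simp: insert_commute\<close>)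
    qed
    ultimately show ?thesis using lw' by auto
  qed
  have part1: "v' \<in> Ilev \<xi> \<delta> \<mu> n"
    using vGn(3) vert_len[where x=v' and k=n] lv' nm by (auto simp: Ilev_def Iof_def Gn_def)
  let ?T = "Gtil \<xi> \<delta> (Suc m) G"
  have par: "\<exists>i. u @ [i] \<in> Iof (Suc m) ?T \<and> v' = piof \<xi> \<delta> \<mu> (Suc m) G (u @ [i])"
    if e: "{u, v'} \<in> snd Gn" and lu: "length u = m" for u
  proof -
    have "{u,v'} \<notin> snd G"
    proof
      assume "{u,v'} \<in> snd G"
      hence "v' \<in> fst G" using edge_mem G_def by blast
      thus False using vert_len[where x=v' and k=m] lv' G_def by auto
    qed
    with e obtain u2 i where u2: "{u,v'} = {u2, piof \<xi> \<delta> \<mu> (Suc m) G (u2 @ [i])}" "u2 \<in> Iof m G" "i \<in> Cset \<xi> \<delta> G u2"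
      unfolding GnS step_def by auto
    have "length u2 = m" using u2(2) by (simp add: Iof_def Ulev_def)
    hence "u2 = u" "v' = piof \<xi> \<delta> \<mu> (Suc m) G (u2 @ [i])" using u2(1) lu lv' by (auto simp: doubleton_eq_iff)
    moreover have "u2 @ [i] \<in> Iof (Suc m) ?T"
      using u2 by (auto simp: Iof_def Gtil_def Ulev_def Cset_def)
    ultimately show ?thesis by blast
  qed
  obtain i where i: "w' @ [i] \<in> Iof (Suc m) ?T" "v' = piof \<xi> \<delta> \<mu> (Suc m) G (w' @ [i])"
    using par[of w'] assms(9) lw' Gn_def by blast
  obtain j where j: "w @ [j] \<in> Iof (Suc m) ?T" "v' = piof \<xi> \<delta> \<mu> (Suc m) G (w @ [j])"
    using par[of w] assms(10) lw Gn_def by (auto simp: insert_commute)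
  define a where "a = w' @ [i]"
  define b where "b = w @ [j]"
  have ww: "w' \<noteq> w" using assms(6) by auto
  have ab: "a \<noteq> b" using ww by (simp add: a_def b_def)
  have sa: "simrel \<xi> \<delta> \<mu> (Suc m) G a v'" using piof_prop[OF fG i(1)] i(2) a_def by simp
  have sb: "simrel \<xi> \<delta> \<mu> (Suc m) G b v'" using piof_prop[OF fG j(1)] j(2) b_def by simp
  have sab: "simrel \<xi> \<delta> \<mu> (Suc m) G a b" using simrel_trans[OF sa simrel_sym[OF sb]] .
  have nab: "\<not> mrel \<xi> \<delta> \<mu> (Suc m) G a b"
  proof
    assume "mrel \<xi> \<delta> \<mu> (Suc m) G a b"
    hence "mrel \<xi> \<delta> \<mu> (Suc m) (Gproc \<xi> \<delta> \<mu> m) (w' @ [i]) (w @ [j])" by (simp add: a_def b_def G_def)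
    from key[OF this lw' lw ww] obtain x where x: "{w',x} \<in> snd G" "{x,w} \<in> snd G" "Suc (length x) = m"
      by (auto simp: G_def)
    have "x \<in> fst Gn" using x(1) edge_mem[where x=w' and y=x and k=m] GGn G_def by auto
    moreover have "{x,w} \<in> snd Gn" "{x,w'} \<in> snd Gn" using x GGn by (auto simp: insert_commute)
    ultimately show False using bad x(3) by blast
  qed
  have nba: "\<not> mrel \<xi> \<delta> \<mu> (Suc m) G b a"
  proof
    assume "mrel \<xi> \<delta> \<mu> (Suc m) G b a"
    hence "mrel \<xi> \<delta> \<mu> (Suc m) (Gproc \<xi> \<delta> \<mu> m) (w @ [j]) (w' @ [i])" by (simp add: a_def b_def G_def)
    from key[OF this lw lw' ww[symmetric]] obtain x where x: "{w,x} \<in> snd G" "{x,w'} \<in> snd G" "Suc (length x) = m"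
      by (auto simp: G_def)
    have "x \<in> fst Gn" using x(1) edge_mem[where x=w and y=x and k=m] GGn G_def by auto
    moreover have "{x,w} \<in> snd Gn" "{x,w'} \<in> snd Gn" using x GGn by (auto simp: insert_commute)
    ultimately show False using bad x(3) by blast
  qed
  let ?R = "{(x, y). mrel \<xi> \<delta> \<mu> (Suc m) G x y \<or> mrel \<xi> \<delta> \<mu> (Suc m) G y x}"
  have irr: "\<not> mrel \<xi> \<delta> \<mu> (Suc m) G x x" for x
  proof
    assume "mrel \<xi> \<delta> \<mu> (Suc m) G x x"
    hence "x \<in> fst ?T" "gdist ?T x x 4" by (auto simp: mrel_def Iof_def)
    moreover have "has_walk ?T x x 0" using calculation(1) unfolding has_walk_def
      by (intro exI[of _ "[x]"]) auto
    ultimately show False by (auto simp: gdist_def)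
  qed
  have "(a, b) \<in> ?R\<^sup>*" using sab by (simp add: simrel_def)
  then obtain c where c: "(a, c) \<in> ?R" "(c, b) \<in> ?R\<^sup>*"
    using ab by (meson converse_rtranclE)
  have ca: "c \<noteq> a" using c(1) irr by auto
  have cb: "c \<noteq> b" using c(1) nab nba by auto
  have cT: "c \<in> Iof (Suc m) ?T" using c(1) by (auto simp: mrel_def)
  have "simrel \<xi> \<delta> \<mu> (Suc m) G c b" using cT c(2) sab by (simp add: simrel_def)
  hence sc: "simrel \<xi> \<delta> \<mu> (Suc m) G c v'" using simrel_trans sb by blast
  have sig: "sigma \<xi> \<delta> \<mu> n v' = {y. simrel \<xi> \<delta> \<mu> (Suc m) G y v'}" by (simp add: sigma_def nm G_def)
  have sub: "{a,b,c} \<subseteq> sigma \<xi> \<delta> \<mu> n v'" using sa sb sc sig by auto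
  have "sigma \<xi> \<delta> \<mu> n v' \<subseteq> fst ?T" using sig simrel_mem[where n="Suc m" and G=G] by (auto simp: Iof_def)
  hence fs: "finite (sigma \<xi> \<delta> \<mu> n v')" using finite_Gtil[OF fG] finite_subset by blast
  have "card {a,b,c} = 3" using ab ca cb by auto
  hence "3 \<le> card (sigma \<xi> \<delta> \<mu> n v')" using card_mono[OF fs sub] by simp
  thus ?thesis using part1 by simp
qed

end
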